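(* Let $n\geq 3$ and let $\rho: B_n \rightarrow GL_n(\mathbb{C})$ be a non-trivial homogeneous $2$-local representation of $B_n$. Let $\rho': SM_n \rightarrow M_n(\mathbb{C})$ be a non-trivial homogeneous $2$-local extension of $\rho$ to $SM_n$. Then $\rho'$ is equivalent to one of the following three representations, where for each $1\le i\le n-1$ we write $D_i(X)$ for the block diagonal matrix $\mathrm{diag}(I_{i-1},X,I_{n-i-1})$ with $X\in M_2(\mathbb{C})$: (1) $\rho'_1$ with $\rho'_1(\sigma_i)=\rho_1(\sigma_i)$ and $\rho'_1(\tau_i)=D_i\begin{pmatrix} 1-(1-a)(1-t) & \frac{1-a}{c}(1-t)\\ c(1-t) & t\end{pmatrix}$, where $a,c,t\in\mathbb{C}$, $a\neq 0$, $c\neq 0$; (2) $\rho'_2$ with $\rho'_2(\sigma_i)=\rho_2(\sigma_i)$ and $\rho'_2(\tau_i)=D_i\begin{pmatrix} x & \frac{1-d}{c}(1-x)\\ c(1-x) & 1-(1-d)(1-x)\end{pmatrix}$, where $c,d,x\in\mathbb{C}$, $c\neq 0$, $d\neq 0$; (3) $\rho'_3$ with $\rho'_3(\sigma_i)=\rho_3(\sigma_i)$ and $\rho'_3(\tau_i)=D_i\begin{pmatrix} x & y\\ \frac{cy}{b} & x\end{pmatrix}$, where $b,c,x,y\in\mathbb{C}$, $b\neq 0$, $c\neq 0$. Here $\rho_1(\sigma_i)=D_i\begin{pmatrix} a&\frac{1-a}{c}\\ c&0\end{pmatrix}$ with $c\neq 0$, $a\neq 1$; $\rho_2(\sigma_i)=D_i\begin{pmatrix}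 0&\frac{1-d}{c}\\ c&d\end{pmatrix}$ with $c\neq0$, $d\neq 1$; and $\rho_3(\sigma_i)=D_i\begin{pmatrix} 0&b\\ c&0\end{pmatrix}$ with $bc\neq 0$ (for all $1\le i\le n-1$). Moreover, if $\rho'(\tau_i)$ is invertible for all $1\leq i\leq n-1$, then $\rho'$ is a representation of the singular braid group $SB_n$.
   Context: The braid group $B_n$ has generators $\sigma_1,\dots,\sigma_{n-1}$ with relations $\sigma_i\sigma_{i+1}\sigma_i=\sigma_{i+1}\sigma_i\sigma_{i+1}$ ($1\le i\le n-2$) and $\sigma_i\sigma_j=\sigma_j\sigma_i$ ($|i-j|\ge2$). The singular braid monoid $SM_n$ is the monoid generated by $\sigma_1^{\pm1},\dots,\sigma_{n-1}^{\pm1},\tau_1,\dots,\tau_{n-1}$ subject to $\sigma_i\sigma_i^{-1}=\sigma_i^{-1}\sigma_i=1$, the braid relations above, and the relations $\tau_i\tau_j=\tau_j\tau_i$ and $\tau_i\sigma_j=\sigma_j\tau_i$ for $|i-j|\ge 2$, $\tau_i\sigma_i=\sigma_i\tau_i$ for $1\le i\le n-1$, and $\sigma_i\sigma_{i+1}\tau_i=\tau_{i+1}\sigma_i\sigma_{i+1}$, $\sigma_{i+1}\sigma_i\tau_{i+1}=\tau_i\sigma_{i+1}\sigma_i$ for $1\le i\le n-2$. The singular braid group $SB_n$ is the group with generators $\sigma_i,\tau_i$ ($1\le i\le n-1$) and the same relations (into which $SM_n$ embeds). A representation of $SM_n$ is a monoid homomorphism into a matrix monoid $M_m(\mathbb{C})$.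 A representation $\rho:B_n\to GL_m(\mathbb{C})$ is homogeneous $k$-local, with $k=m-n+2$, if there is $M\in M_k(\mathbb{C})$ such that $\rho(\sigma_i)=\mathrm{diag}(I_{i-1},M,I_{n-i-1})$ for all $1\le i\le n-1$. A homogeneous $k$-local extension of such $\rho$ to $SM_n$ is a representation $\rho':SM_n\to M_m(\mathbb{C})$ with $\rho'(\sigma_i)=\rho(\sigma_i)$ and $\rho'(\tau_i)=\mathrm{diag}(I_{i-1},N,I_{n-i-1})$ for all $i$, for a single matrix $N\in M_k(\mathbb{C})$. "Non-trivial" means not sending every generator $\sigma_i$ to the identity. Two representations are equivalent if they are conjugate by a fixed invertible matrix. *)

theory Defs
  imports "Jordan_Normal_Form.Matrix" Complex_Main
begin

text \<open>Block-diagonal matrix diag(I_(i-1), X, I_(n-i-1)) of size n, for a 2x2 matrix X and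
  1 <= i <= n-1 (rows/columns are 0-indexed, so X occupies rows/columns i-1 and i).\<close>
definition blk :: "nat \<Rightarrow> nat \<Rightarrow> complex mat \<Rightarrow> complex mat" where
  "blk n i X = mat n n (\<lambda>(r,s).
     if i - 1 \<le> r \<and> r \<le> i \<and> i - 1 \<le> s \<and> s \<le> i then X $$ (r + 1 - i, s + 1 - i)
     else if r = s then 1 else 0)"

definition mat2 :: "complex \<Rightarrow> complex \<Rightarrow> complex \<Rightarrow> complex \<Rightarrow> complex mat" where
  "mat2 p q r s = mat_of_rows_list 2 [[p, q], [r, s]]"

text \<open>A representation of B_n into GL_m(C) is given (by the universal property of the
  presentation) by the images S i of the generators sigma_i, 1 <= i <= n-1: invertible
  m x m matrices satisfying the braid relations.\<close>
definition braid_rep :: "nat \<Rightarrow> nat \<Rightarrow> (nat \<Rightarrow> complex mat) \<Rightarrow> bool" where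
  "braid_rep n m S \<longleftrightarrow>
     (\<forall>i\<in>{1..n-1}. S i \<in> carrier_mat m m \<and> invertible_mat (S i)) \<and>
     (\<forall>i\<in>{1..n-2}. S i * S (i+1) * S i = S (i+1) * S i * S (i+1)) \<and>
     (\<forall>i\<in>{1..n-1}. \<forall>j\<in>{1..n-1}. (i + 2 \<le> j \<or> j + 2 \<le> i) \<longrightarrow> S i * S j = S j * S i)"

text \<open>A representation of the singular braid monoid SM_n into M_m(C) is given by the images
  S i of sigma_i and T i of tau_i (the image of sigma_i^(-1) is forced to be the inverse of
  S i by the relations sigma_i sigma_i^(-1) = sigma_i^(-1) sigma_i = 1).\<close>
definition sing_monoid_rep :: "nat \<Rightarrow> nat \<Rightarrow> (nat \<Rightarrow> complex mat) \<Rightarrow> (nat \<Rightarrow> complex mat) \<Rightarrow> bool" where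
  "sing_monoid_rep n m S T \<longleftrightarrow>
     braid_rep n m S \<and>
     (\<forall>i\<in>{1..n-1}. T i \<in> carrier_mat m m) \<and>
     (\<forall>i\<in>{1..n-1}. \<forall>j\<in>{1..n-1}. (i + 2 \<le> j \<or> j + 2 \<le> i) \<longrightarrow>
         T i * T j = T j * T i \<and> T i * S j = S j * T i) \<and>
     (\<forall>i\<in>{1..n-1}. T i * S i = S i * T i) \<and>
     (\<forall>i\<in>{1..n-2}. S i * S (i+1) * T i = T (i+1) * S i * S (i+1) \<and>
                    S (i+1) * S i * T (i+1) = T i * S (i+1) * S i)"

definition sing_group_rep :: "nat \<Rightarrow> nat \<Rightarrow> (nat \<Rightarrow> complex mat) \<Rightarrow> (nat \<Rightarrow> complex mat) \<Rightarrow> bool" where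
  "sing_group_rep n m S T \<longleftrightarrow>
     sing_monoid_rep n m S T \<and> (\<forall>i\<in>{1..n-1}. invertible_mat (T i))"

definition homogeneous_2local :: "nat \<Rightarrow> (nat \<Rightarrow> complex mat) \<Rightarrow> bool" where
  "homogeneous_2local n S \<longleftrightarrow>
     (\<exists>M\<in>carrier_mat 2 2. \<forall>i\<in>{1..n-1}. S i = blk n i M)"

definition nontrivial :: "nat \<Rightarrow> (nat \<Rightarrow> complex mat) \<Rightarrow> bool" where
  "nontrivial n S \<longleftrightarrow> (\<exists>i\<in>{1..n-1}. S i \<noteq> 1\<^sub>m n)"

definition equiv_sm_rep :: "nat \<Rightarrow> (nat \<Rightarrow> complex mat) \<Rightarrow> (nat \<Rightarrow> complex mat)
    \<Rightarrow> (nat \<Rightarrow> complex mat) \<Rightarrow> (nat \<Rightarrow> complex mat) \<Rightarrow> bool" where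
  "equiv_sm_rep n S T S' T' \<longleftrightarrow>
     (\<exists>P\<in>carrier_mat n n. \<exists>Q\<in>carrier_mat n n. P * Q = 1\<^sub>m n \<and> Q * P = 1\<^sub>m n \<and>
        (\<forall>i\<in>{1..n-1}. S' i = P * S i * Q \<and> T' i = P * T i * Q))"

end

theory Submission
  imports Defs
begin

definition m3 :: "complex \<Rightarrow> complex \<Rightarrow> complex \<Rightarrow> complex \<Rightarrow> complex \<Rightarrow> complex \<Rightarrow> complex \<Rightarrow> complex \<Rightarrow> complex \<Rightarrow> complex mat" where
  "m3 a b c d e f g h k = mat_of_rows_list 3 [[a,b,c],[d,e,f],[g,h,k]]"

lemma less3: "(i::nat) < 3 \<longleftrightarrow> i = 0 \<or> i = 1 \<or> i = 2" by auto
lemma less2: "(i::nat) < 2 \<longleftrightarrow> i = 0 \<or> i = 1" by auto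

lemma m3_carrier: "m3 a b c d e f g h k \<in> carrier_mat 3 3"
  by (intro carrier_matI) (simp_all add: m3_def mat_of_rows_list_def)

lemma m3_mult: "m3 a b c d e f g h k * m3 a' b' c' d' e' f' g' h' k' =
  m3 (a*a'+b*d'+c*g') (a*b'+b*e'+c*h') (a*c'+b*f'+c*k')
     (d*a'+e*d'+f*g') (d*b'+e*e'+f*h') (d*c'+e*f'+f*k')
     (g*a'+h*d'+k*g') (g*b'+h*e'+k*h') (g*c'+h*f'+k*k')"
proof (rule eq_matI)
  fix i j assume "i < dim_row (m3 (a*a'+b*d'+c*g') (a*b'+b*e'+c*h') (a*c'+b*f'+c*k')
     (d*a'+e*d'+f*g') (d*b'+e*e'+f*h') (d*c'+e*f'+f*k')
     (g*a'+h*d'+k*g') (g*b'+h*e'+k*h') (g*c'+h*f'+k*k'))" "j < dim_col (m3 (a*a'+b*d'+c*g') (a*b'+b*e'+c*h') (a*c'+b*f'+c*k')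
     (d*a'+e*d'+f*g') (d*b'+e*e'+f*h') (d*c'+e*f'+f*k')
     (g*a'+h*d'+k*g') (g*b'+h*e'+k*h') (g*c'+h*f'+k*k'))"
  then have "i < 3" "j < 3" by (auto simp: m3_def mat_of_rows_list_def)
  then show "(m3 a b c d e f g h k * m3 a' b' c' d' e' f' g' h' k') $$ (i, j) = m3 (a*a'+b*d'+c*g') (a*b'+b*e'+c*h') (a*c'+b*f'+c*k')
     (d*a'+e*d'+f*g') (d*b'+e*e'+f*h') (d*c'+e*f'+f*k')
     (g*a'+h*d'+k*g') (g*b'+h*e'+k*h') (g*c'+h*f'+k*k') $$ (i, j)"
    unfolding less3 by (elim disjE) (simp_all add: m3_def mat_of_rows_list_def scalar_prod_def row_def col_def eval_nat_numeral)
qed (auto simp: m3_def mat_of_rows_list_def)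

lemma m3_eq: "m3 a b c d e f g h k = m3 a' b' c' d' e' f' g' h' k' \<longleftrightarrow>
  a=a' \<and> b=b' \<and> c=c' \<and> d=d' \<and> e=e' \<and> f=f' \<and> g=g' \<and> h=h' \<and> k=k'"
proof
  assume H: "m3 a b c d e f g h k = m3 a' b' c' d' e' f' g' h' k'"
  have "\<And>i j. i<3 \<Longrightarrow> j<3 \<Longrightarrow> m3 a b c d e f g h k $$ (i,j) = m3 a' b' c' d' e' f' g' h' k' $$ (i,j)"
    using H by simp
  from this[of 0 0] this[of 0 1] this[of 0 2] this[of 1 0] this[of 1 1] this[of 1 2]
    this[of 2 0] this[of 2 1] this[of 2 2]
  show "a=a' \<and> b=b' \<and> c=c' \<and> d=d' \<and> e=e' \<and> f=f' \<and> g=g' \<and> h=h' \<and> k=k'"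
    by (simp add: m3_def mat_of_rows_list_def)
qed simp

lemma mat2_eta: "M \<in> carrier_mat 2 2 \<Longrightarrow> M = mat2 (M$$(0,0)) (M$$(0,1)) (M$$(1,0)) (M$$(1,1))"
proof (rule eq_matI)
  assume M: "M \<in> carrier_mat 2 2"
  fix i j assume "i < dim_row (mat2 (M$$(0,0)) (M$$(0,1)) (M$$(1,0)) (M$$(1,1)))" "j < dim_col (mat2 (M$$(0,0)) (M$$(0,1)) (M$$(1,0)) (M$$(1,1)))"
  then have "i < 2" "j < 2" by (auto simp: mat2_def mat_of_rows_list_def)
  then show "M $$ (i, j) = mat2 (M$$(0,0)) (M$$(0,1)) (M$$(1,0)) (M$$(1,1)) $$ (i, j)"
    unfolding less2 by (elim disjE) (simp_all add: mat2_def mat_of_rows_list_def)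
qed (auto simp: mat2_def mat_of_rows_list_def)

lemma mat2_carrier: "mat2 p q r s \<in> carrier_mat 2 2"
  by (intro carrier_matI) (simp_all add: mat2_def mat_of_rows_list_def)

lemma blk31: "blk 3 1 (mat2 p q r s) = m3 p q 0 r s 0 0 0 1"
proof (rule eq_matI)
  fix i j assume "i < dim_row (m3 p q 0 r s 0 0 0 1)" "j < dim_col (m3 p q 0 r s 0 0 0 1)"
  then have "i < 3" "j < 3" by (auto simp: m3_def mat_of_rows_list_def)
  then show "blk 3 1 (mat2 p q r s) $$ (i, j) = m3 p q 0 r s 0 0 0 1 $$ (i, j)"
    unfolding less3 by (elim disjE) (simp_all add: blk_def m3_def mat2_def mat_of_rows_list_def)
qed (auto simp: blk_def m3_def mat_of_rows_list_def)

lemma blk32: "blk 3 2 (mat2 p q r s) = m3 1 0 0 0 p q 0 r s"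
proof (rule eq_matI)
  fix i j assume "i < dim_row (m3 1 0 0 0 p q 0 r s)" "j < dim_col (m3 1 0 0 0 p q 0 r s)"
  then have "i < 3" "j < 3" by (auto simp: m3_def mat_of_rows_list_def)
  then show "blk 3 2 (mat2 p q r s) $$ (i, j) = m3 1 0 0 0 p q 0 r s $$ (i, j)"
    unfolding less3 by (elim disjE) (simp_all add: blk_def m3_def mat2_def mat_of_rows_list_def)
qed (auto simp: blk_def m3_def mat_of_rows_list_def)

lemma blk_split: assumes "n \<ge> 3" "i = 1 \<or> i = 2"
  shows "blk n i X = four_block_mat (blk 3 i X) (0\<^sub>m 3 (n-3)) (0\<^sub>m (n-3) 3) (1\<^sub>m (n-3))"
  by (rule eq_matI) (use assms in \<open>auto simp: blk_def\<close>)

definition fb :: "nat \<Rightarrow> complex mat \<Rightarrow> complex mat" where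
  "fb n A = four_block_mat A (0\<^sub>m 3 (n-3)) (0\<^sub>m (n-3) 3) (1\<^sub>m (n-3))"

lemma fb_mult: assumes "A \<in> carrier_mat 3 3" "B \<in> carrier_mat 3 3"
  shows "fb n A * fb n B = fb n (A * B)"
  unfolding fb_def apply (subst mult_four_block_mat[OF assms(1) zero_carrier_mat zero_carrier_mat one_carrier_mat assms(2) zero_carrier_mat zero_carrier_mat])
  using assms apply auto
  done

lemma fb_inj: assumes "A \<in> carrier_mat 3 3" "B \<in> carrier_mat 3 3" "fb n A = fb n B"
  shows "A = B"
proof (rule eq_matI)
  fix i j assume "i < dim_row B" "j < dim_col B"
  then have ij: "i < 3" "j < 3" using assms(2) by auto
  have "fb n A $$ (i,j) = fb n B $$ (i,j)" by (simp only: assms(3))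
  moreover have "fb n A $$ (i,j) = A $$ (i,j)" using ij assms(1) by (simp add: fb_def)
  moreover have "fb n B $$ (i,j) = B $$ (i,j)" using ij assms(2) by (simp add: fb_def)
  ultimately show "A $$ (i,j) = B $$ (i,j)" by simp
qed (use assms(1,2) in auto)

lemma blk_carrier: "blk n i X \<in> carrier_mat n n"
  by (intro carrier_matI) (simp_all add: blk_def)

lemma blk3_carrier: "blk 3 i X \<in> carrier_mat 3 3" by (intro carrier_matI) (simp_all add: blk_def)

lemma blk_fb: "n \<ge> 3 \<Longrightarrow> i \<in> {1,2} \<Longrightarrow> blk n i X = fb n (blk 3 i X)"
  unfolding fb_def by (rule blk_split) auto

lemma red3: assumes "n \<ge> 3" "i \<in> {1,2}" "j \<in> {1,2}" "k \<in> {1,2}" "i' \<in> {1,2}" "j' \<in> {1,2}" "k' \<in> {1,2}"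
  and "blk n i X * blk n j Y * blk n k Z = blk n i' X' * blk n j' Y' * blk n k' Z'"
  shows "blk 3 i X * blk 3 j Y * blk 3 k Z = blk 3 i' X' * blk 3 j' Y' * blk 3 k' Z'"
proof -
  have m: "blk n i X * blk n j Y * blk n k Z = fb n (blk 3 i X * blk 3 j Y * blk 3 k Z)"
    if h: "i \<in> {1,2}" "j \<in> {1,2}" "k \<in> {1,2}" for i j k :: nat and X Y Z
  proof -
    have e1: "blk n i X = fb n (blk 3 i X)" by (rule blk_fb[OF assms(1) h(1)])
    have e2: "blk n j Y = fb n (blk 3 j Y)" by (rule blk_fb[OF assms(1) h(2)])
    have e3: "blk n k Z = fb n (blk 3 k Z)" by (rule blk_fb[OF assms(1) h(3)])
    have d1: "blk 3 i X \<in> carrier_mat 3 3" "blk 3 j Y \<in> carrier_mat 3 3" "blk 3 k Z \<in> carrier_mat 3 3"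
      "blk 3 i X * blk 3 j Y \<in> carrier_mat 3 3" by (auto intro!: carrier_matI simp: blk_def)
    have "blk n i X * blk n j Y * blk n k Z = fb n (blk 3 i X) * fb n (blk 3 j Y) * fb n (blk 3 k Z)"
      unfolding e1 e2 e3 by (rule refl)
    also have "\<dots> = fb n (blk 3 i X * blk 3 j Y) * fb n (blk 3 k Z)"
      unfolding fb_mult[OF d1(1) d1(2)] by (rule refl)
    also have "\<dots> = fb n (blk 3 i X * blk 3 j Y * blk 3 k Z)"
      by (rule fb_mult[OF d1(4) d1(3)])
    finally show ?thesis .
  qed
  have "fb n (blk 3 i X * blk 3 j Y * blk 3 k Z) = blk n i X * blk n j Y * blk n k Z"
    by (rule sym, rule m[OF assms(2-4)])
  also have "\<dots> = blk n i' X' * blk n j' Y' * blk n k' Z'" by (rule assms(8))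
  also have "\<dots> = fb n (blk 3 i' X' * blk 3 j' Y' * blk 3 k' Z')" by (rule m[OF assms(5-7)])
  finally have F: "fb n (blk 3 i X * blk 3 j Y * blk 3 k Z) = fb n (blk 3 i' X' * blk 3 j' Y' * blk 3 k' Z')" .
  have c1: "blk 3 i X * blk 3 j Y * blk 3 k Z \<in> carrier_mat 3 3" by (intro carrier_matI) (simp_all add: blk_def)
  have c2: "blk 3 i' X' * blk 3 j' Y' * blk 3 k' Z' \<in> carrier_mat 3 3" by (intro carrier_matI) (simp_all add: blk_def)
  show ?thesis using fb_inj[OF c1 c2 F] .
qed

lemma red2: assumes "n \<ge> 3" "i \<in> {1,2}" "j \<in> {1,2}" "i' \<in> {1,2}" "j' \<in> {1,2}"
  and "blk n i X * blk n j Y = blk n i' X' * blk n j' Y'"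
  shows "blk 3 i X * blk 3 j Y = blk 3 i' X' * blk 3 j' Y'"
proof -
  have m: "blk n i X * blk n j Y = fb n (blk 3 i X * blk 3 j Y)"
    if h: "i \<in> {1,2}" "j \<in> {1,2}" for i j :: nat and X Y
  proof -
    have e1: "blk n i X = fb n (blk 3 i X)" by (rule blk_fb[OF assms(1) h(1)])
    have e2: "blk n j Y = fb n (blk 3 j Y)" by (rule blk_fb[OF assms(1) h(2)])
    have d1: "blk 3 i X \<in> carrier_mat 3 3" "blk 3 j Y \<in> carrier_mat 3 3" by (auto intro!: carrier_matI simp: blk_def)
    have "blk n i X * blk n j Y = fb n (blk 3 i X) * fb n (blk 3 j Y)"
      unfolding e1 e2 by (rule refl)
    also have "\<dots> = fb n (blk 3 i X * blk 3 j Y)"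
      by (rule fb_mult[OF d1(1) d1(2)])
    finally show ?thesis .
  qed
  have "fb n (blk 3 i X * blk 3 j Y) = blk n i X * blk n j Y"
    by (rule sym, rule m[OF assms(2-3)])
  also have "\<dots> = blk n i' X' * blk n j' Y'" by (rule assms(6))
  also have "\<dots> = fb n (blk 3 i' X' * blk 3 j' Y')" by (rule m[OF assms(4-5)])
  finally have F: "fb n (blk 3 i X * blk 3 j Y) = fb n (blk 3 i' X' * blk 3 j' Y')" .
  have c1: "blk 3 i X * blk 3 j Y \<in> carrier_mat 3 3" by (intro carrier_matI) (simp_all add: blk_def)
  have c2: "blk 3 i' X' * blk 3 j' Y' \<in> carrier_mat 3 3" by (intro carrier_matI) (simp_all add: blk_def)
  show ?thesis using fb_inj[OF c1 c2 F] .
qed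

lemma inv_dims: assumes "invertible_mat (A :: complex mat)" "A \<in> carrier_mat n n"
  obtains B where "A * B = 1\<^sub>m n" "B * A = 1\<^sub>m n" "B \<in> carrier_mat n n"
proof -
  obtain B where AB: "A * B = 1\<^sub>m (dim_row A)" and BA: "B * A = 1\<^sub>m (dim_row B)"
    using assms(1) unfolding invertible_mat_def inverts_mat_def by blast
  have dA: "dim_row A = n" "dim_col A = n" using assms(2) by auto
  have dRB: "dim_row B = n" by (metis BA index_mult_mat(3) index_one_mat(3) dA(2))
  have dCB: "dim_col B = n" by (metis AB index_mult_mat(3) index_one_mat(3) dA(1))
  show ?thesis using that AB BA dA dRB dCB by (auto intro!: carrier_matI)
qed

lemma zero_row: assumes "invertible_mat (A :: complex mat)" "A \<in> carrier_mat n n" "k < n" "\<forall>j<n. A $$ (k,j) = 0"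
  shows False
proof -
  obtain B where AB: "A * B = 1\<^sub>m n" and B: "B \<in> carrier_mat n n" using inv_dims[OF assms(1,2)] by blast
  have "(A * B) $$ (k,k) = 1" using AB assms(3) by simp
  moreover have "(A * B) $$ (k,k) = (\<Sum>i\<in>{0..<n}. row A k $ i * col B k $ i)"
    using assms(2,3) B by (simp add: scalar_prod_def)
  moreover have "(\<Sum>i\<in>{0..<n}. row A k $ i * col B k $ i) = 0"
    by (rule sum.neutral) (use assms B in auto)
  ultimately show False by simp
qed

lemma zero_col: assumes "invertible_mat (A :: complex mat)" "A \<in> carrier_mat n n" "k < n" "\<forall>j<n. A $$ (j,k) = 0"
  shows False
proof -
  obtain B where BA: "B * A = 1\<^sub>m n" and B: "B \<in> carrier_mat n n" using inv_dims[OF assms(1,2)] by blast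
  have "(B * A) $$ (k,k) = 1" using BA assms(3) by simp
  moreover have "(B * A) $$ (k,k) = (\<Sum>i\<in>{0..<n}. row B k $ i * col A k $ i)"
    using assms(2,3) B by (simp add: scalar_prod_def)
  moreover have "(\<Sum>i\<in>{0..<n}. row B k $ i * col A k $ i) = 0"
    by (rule sum.neutral) (use assms B in auto)
  ultimately show False by simp
qed

lemma mat2_idx: "mat2 p q r s $$ (0,0) = p" "mat2 p q r s $$ (0,1) = q"
   "mat2 p q r s $$ (1,0) = r" "mat2 p q r s $$ (1,1) = s"
  by (simp_all add: mat2_def mat_of_rows_list_def)

lemma mat2_idx': "mat2 p q r s $$ (0,Suc 0) = q"
   "mat2 p q r s $$ (Suc 0,0) = r" "mat2 p q r s $$ (Suc 0,Suc 0) = s"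
  by (simp_all add: mat2_def mat_of_rows_list_def)

lemma blk_row0: "n \<ge> 3 \<Longrightarrow> j < n \<Longrightarrow> blk n 1 (mat2 p q r s) $$ (0,j) = (if j = 0 then p else if j = 1 then q else 0)"
  by (cases "j = 0"; cases "j = 1") (auto simp: blk_def mat2_idx mat2_idx')
lemma blk_row1: "n \<ge> 3 \<Longrightarrow> j < n \<Longrightarrow> blk n 1 (mat2 p q r s) $$ (1,j) = (if j = 0 then r else if j = 1 then s else 0)"
  by (cases "j = 0"; cases "j = 1") (auto simp: blk_def mat2_idx mat2_idx')
lemma blk_col0: "n \<ge> 3 \<Longrightarrow> j < n \<Longrightarrow> blk n 1 (mat2 p q r s) $$ (j,0) = (if j = 0 then p else if j = 1 then r else 0)"
  by (cases "j = 0"; cases "j = 1") (auto simp: blk_def mat2_idx mat2_idx')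
lemma blk_col1: "n \<ge> 3 \<Longrightarrow> j < n \<Longrightarrow> blk n 1 (mat2 p q r s) $$ (j,1) = (if j = 0 then q else if j = 1 then s else 0)"
  by (cases "j = 0"; cases "j = 1") (auto simp: blk_def mat2_idx mat2_idx')

lemma blk_id: "i \<ge> 1 \<Longrightarrow> blk n i (mat2 1 0 0 1) = 1\<^sub>m n"
proof (rule eq_matI)
  fix a b assume i: "i \<ge> 1" and ab: "a < dim_row (1\<^sub>m n :: complex mat)" "b < dim_col (1\<^sub>m n :: complex mat)"
  have e: "\<And>u v. u < 2 \<Longrightarrow> v < 2 \<Longrightarrow> mat2 1 0 0 1 $$ (u,v) = (if u = v then 1 else 0)"
    unfolding less2 by (auto simp: mat2_idx mat2_idx')
  show "blk n i (mat2 1 0 0 1) $$ (a, b) = 1\<^sub>m n $$ (a, b)"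
    using ab i by (auto simp: blk_def e)
qed (auto simp: blk_def)


lemma classify:
  fixes p q r s :: complex
  assumes b1: "p*(p+q*r-1) = 0" and b2: "p*q*s = 0" and b3: "p*r*s = 0" and b4: "p*s*(s-p) = 0"
    and b5: "s*(1-q*r-s) = 0"
    and nd1: "\<not>(p=0 \<and> q=0)" and nd2: "\<not>(p=0 \<and> r=0)" and nd3: "\<not>(r=0 \<and> s=0)" and nd4: "\<not>(q=0 \<and> s=0)"
    and nt: "\<not>(p=1 \<and> q=0 \<and> r=0 \<and> s=1)"
  shows "(s=0 \<and> p\<noteq>0 \<and> p\<noteq>1 \<and> r\<noteq>0 \<and> q = (1-p)/r) \<or> (p=0 \<and> s\<noteq>0 \<and> s\<noteq>1 \<and> r\<noteq>0 \<and> q=(1-s)/r)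
     \<or> (p=0 \<and> s=0 \<and> q\<noteq>0 \<and> r\<noteq>0)"
proof (cases "p = 0")
  case True
  show ?thesis
  proof (cases "s = 0")
    case True
    then show ?thesis using \<open>p = 0\<close> nd1 nd2 by auto
  next
    case False
    have "1-q*r-s = 0" using b5 False by simp
    then have s: "s = 1 - q*r" by Groebner_Basis.algebra
    have "q \<noteq> 0" "r \<noteq> 0" using nd1 nd2 \<open>p=0\<close> by auto
    then have "s \<noteq> 1" using s by simp
    moreover have "q = (1-s)/r" using s \<open>r \<noteq> 0\<close> by (simp add: field_simps)
    ultimately show ?thesis using \<open>p=0\<close> False \<open>r \<noteq> 0\<close> by auto
  qed
next
  case False
  show ?thesis
  proof (cases "s = 0")
    case True
    have "p+q*r-1 = 0" using b1 False by simp
    then have p: "p = 1 - q*r" by Groebner_Basis.algebra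
    have "q \<noteq> 0" "r \<noteq> 0" using nd3 nd4 True by auto
    then have "p \<noteq> 1" using p by simp
    moreover have "q = (1-p)/r" using p \<open>r \<noteq> 0\<close> by (simp add: field_simps)
    ultimately show ?thesis using False True \<open>r \<noteq> 0\<close> by auto
  next
    case s0: False
    have q: "q = 0" using b2 False s0 by simp
    have r: "r = 0" using b3 False s0 by simp
    have "s = p" using b4 False s0 by simp
    moreover have "p = 1" using b1 False q by simp
    ultimately show ?thesis using nt q r by simp
  qed
qed

lemma one_conj: "1\<^sub>m n * blk n i X * 1\<^sub>m n = blk n i X"
proof -
  have c: "blk n i X \<in> carrier_mat n n" by (rule blk_carrier)
  show ?thesis using c by simp
qed

theorem theorem3p3:
  fixes n :: nat and S T :: "nat \<Rightarrow> complex mat"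
  assumes "n \<ge> 3"
    and "braid_rep n n S" and "homogeneous_2local n S" and "nontrivial n S"
    and "sing_monoid_rep n n S T" and "homogeneous_2local n T"
  shows "((\<exists>a c t. a \<noteq> 0 \<and> a \<noteq> 1 \<and> c \<noteq> 0 \<and>
            equiv_sm_rep n S T
              (\<lambda>i. blk n i (mat2 a ((1 - a) / c) c 0))
              (\<lambda>i. blk n i (mat2 (1 - (1 - a) * (1 - t)) ((1 - a) / c * (1 - t)) (c * (1 - t)) t)))
         \<or> (\<exists>c d x. c \<noteq> 0 \<and> d \<noteq> 0 \<and> d \<noteq> 1 \<and>
            equiv_sm_rep n S T
              (\<lambda>i. blk n i (mat2 0 ((1 - d) / c) c d))
              (\<lambda>i. blk n i (mat2 x ((1 - d) / c * (1 - x)) (c * (1 - x)) (1 - (1 - d) * (1 - x)))))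
         \<or> (\<exists>b c x y. b \<noteq> 0 \<and> c \<noteq> 0 \<and>
            equiv_sm_rep n S T
              (\<lambda>i. blk n i (mat2 0 b c 0))
              (\<lambda>i. blk n i (mat2 x y (c * y / b) x))))
       \<and> ((\<forall>i\<in>{1..n-1}. invertible_mat (T i)) \<longrightarrow> sing_group_rep n n S T)"
proof -
  have n3: "n \<ge> 3" by (rule assms(1))
  obtain M where M: "M \<in> carrier_mat 2 2" and SM: "\<forall>i\<in>{1..n-1}. S i = blk n i M"
    using assms(3) unfolding homogeneous_2local_def by blast
  obtain N where N: "N \<in> carrier_mat 2 2" and TN: "\<forall>i\<in>{1..n-1}. T i = blk n i N"
    using assms(6) unfolding homogeneous_2local_def by blast
  define p where "p = M $$ (0,0)"
  define q where "q = M $$ (0,1)"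
  define r where "r = M $$ (1,0)"
  define s where "s = M $$ (1,1)"
  define x where "x = N $$ (0,0)"
  define y where "y = N $$ (0,1)"
  define z where "z = N $$ (1,0)"
  define w where "w = N $$ (1,1)"
  have Mq: "M = mat2 p q r s" unfolding p_def q_def r_def s_def by (rule mat2_eta[OF M])
  have Nq: "N = mat2 x y z w" unfolding x_def y_def z_def w_def by (rule mat2_eta[OF N])
  have i1: "(1::nat) \<in> {1..n-1}" and i2: "(2::nat) \<in> {1..n-1}" and i1': "(1::nat) \<in> {1..n-2}"
    using n3 by auto
  have S1: "S 1 = blk n 1 (mat2 p q r s)" using SM i1 Mq by blast
  have S2: "S 2 = blk n 2 (mat2 p q r s)" using SM i2 Mq by blast
  have T1: "T 1 = blk n 1 (mat2 x y z w)" using TN i1 Nq by blast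
  have T2: "T 2 = blk n 2 (mat2 x y z w)" using TN i2 Nq by blast
  have br0: "S 1 * S (1+1) * S 1 = S (1+1) * S 1 * S (1+1)"
    using assms(2) i1' unfolding braid_rep_def by blast
  have br: "S 1 * S 2 * S 1 = S 2 * S 1 * S 2" using br0 by (simp only: one_add_one)
  have inv1: "invertible_mat (S 1)" and car1: "S 1 \<in> carrier_mat n n"
    using assms(2) i1 unfolding braid_rep_def by blast+
  have cm0: "T 1 * S 1 = S 1 * T 1" using assms(5) i1 unfolding sing_monoid_rep_def by blast
  have r10: "S 1 * S (1+1) * T 1 = T (1+1) * S 1 * S (1+1) \<and> S (1+1) * S 1 * T (1+1) = T 1 * S (1+1) * S 1"
    using assms(5) i1' unfolding sing_monoid_rep_def by blast
  have r1: "S 1 * S 2 * T 1 = T 2 * S 1 * S 2" and r2: "S 2 * S 1 * T 2 = T 1 * S 2 * S 1"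
    using r10 by (simp_all only: one_add_one)
  have o12: "(1::nat) \<in> {1,2}" "(2::nat) \<in> {1,2}" by auto
  have hB: "blk 3 1 (mat2 p q r s) * blk 3 2 (mat2 p q r s) * blk 3 1 (mat2 p q r s)
      = blk 3 2 (mat2 p q r s) * blk 3 1 (mat2 p q r s) * blk 3 2 (mat2 p q r s)"
    by (rule red3[OF n3 o12(1) o12(2) o12(1) o12(2) o12(1) o12(2) br[unfolded S1 S2]])
  have hC: "blk 3 1 (mat2 x y z w) * blk 3 1 (mat2 p q r s) = blk 3 1 (mat2 p q r s) * blk 3 1 (mat2 x y z w)"
    by (rule red2[OF n3 o12(1) o12(1) o12(1) o12(1) cm0[unfolded S1 T1]])
  have hR1: "blk 3 1 (mat2 p q r s) * blk 3 2 (mat2 p q r s) * blk 3 1 (mat2 x y z w)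
      = blk 3 2 (mat2 x y z w) * blk 3 1 (mat2 p q r s) * blk 3 2 (mat2 p q r s)"
    by (rule red3[OF n3 o12(1) o12(2) o12(1) o12(2) o12(1) o12(2) r1[unfolded S1 S2 T1 T2]])
  have hR2: "blk 3 2 (mat2 p q r s) * blk 3 1 (mat2 p q r s) * blk 3 2 (mat2 x y z w)
      = blk 3 1 (mat2 x y z w) * blk 3 2 (mat2 p q r s) * blk 3 1 (mat2 p q r s)"
    by (rule red3[OF n3 o12(2) o12(1) o12(2) o12(1) o12(2) o12(1) r2[unfolded S1 S2 T1 T2]])
  note eB = hB[unfolded blk31 blk32 m3_mult m3_eq]
  note eC = hC[unfolded blk31 blk32 m3_mult m3_eq]
  note eR1 = hR1[unfolded blk31 blk32 m3_mult m3_eq]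
  note eR2 = hR2[unfolded blk31 blk32 m3_mult m3_eq]
  have b1: "p*(p+q*r-1) = 0" using eB by (elim conjE) Groebner_Basis.algebra
  have b2: "p*q*s = 0" using eB by (elim conjE) Groebner_Basis.algebra
  have b3: "p*r*s = 0" using eB by (elim conjE) Groebner_Basis.algebra
  have b4: "p*s*(s-p) = 0" using eB by (elim conjE) Groebner_Basis.algebra
  have b5: "s*(1-q*r-s) = 0" using eB by (elim conjE) Groebner_Basis.algebra
  have nd1: "\<not>(p=0 \<and> q=0)"
  proof
    assume h: "p=0 \<and> q=0"
    have zz: "\<forall>j<n. S 1 $$ (0,j) = 0" using h S1 blk_row0[OF n3] by simp
    show False using zero_row[OF inv1 car1 _ zz] n3 by simp
  qed
  have nd2: "\<not>(p=0 \<and> r=0)"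
  proof
    assume h: "p=0 \<and> r=0"
    have zz: "\<forall>j<n. S 1 $$ (j,0) = 0" using h S1 blk_col0[OF n3] by simp
    show False using zero_col[OF inv1 car1 _ zz] n3 by simp
  qed
  have nd3: "\<not>(r=0 \<and> s=0)"
  proof
    assume h: "r=0 \<and> s=0"
    have zz: "\<forall>j<n. S 1 $$ (1,j) = 0" using h S1 blk_row1[OF n3] by simp
    show False using zero_row[OF inv1 car1 _ zz] n3 by simp
  qed
  have nd4: "\<not>(q=0 \<and> s=0)"
  proof
    assume h: "q=0 \<and> s=0"
    have zz: "\<forall>j<n. S 1 $$ (j,1) = 0" using h S1 blk_col1[OF n3] by simp
    show False using zero_col[OF inv1 car1 _ zz] n3 by simp
  qed
  have nt: "\<not>(p=1 \<and> q=0 \<and> r=0 \<and> s=1)"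
  proof
    assume h: "p=1 \<and> q=0 \<and> r=0 \<and> s=1"
    have "\<forall>i\<in>{1..n-1}. S i = 1\<^sub>m n" using SM Mq h blk_id by auto
    then show False using assms(4) unfolding nontrivial_def by blast
  qed
  note cls = classify[OF b1 b2 b3 b4 b5 nd1 nd2 nd3 nd4 nt]
  have part2: "(\<forall>i\<in>{1..n-1}. invertible_mat (T i)) \<longrightarrow> sing_group_rep n n S T"
    using assms(5) unfolding sing_group_rep_def by blast
  have equiv: "equiv_sm_rep n S T (\<lambda>i. blk n i M') (\<lambda>i. blk n i N')" if "M' = M" "N' = N" for M' N'
    unfolding equiv_sm_rep_def
  proof (intro bexI[of _ "1\<^sub>m n"] conjI ballI)
    fix i assume i: "i \<in> {1..n-1}"
    show "blk n i M' = 1\<^sub>m n * S i * 1\<^sub>m n" using SM i that one_conj by simp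
    show "blk n i N' = 1\<^sub>m n * T i * 1\<^sub>m n" using TN i that one_conj by simp
  qed auto
  from cls show ?thesis
  proof (elim disjE conjE)
    assume c: "s = 0" "p \<noteq> 0" "p \<noteq> 1" "r \<noteq> 0" "q = (1-p)/r"
    have qr: "q*r = 1-p" using c by simp
    have e1: "p*(x + q*z - 1) = 0" using eR1 eR2 c(1) by (elim conjE) Groebner_Basis.algebra
    have e2: "p*(y + q*w - q) = 0" using eR1 eR2 c(1) by (elim conjE) Groebner_Basis.algebra
    have e3: "p*(z + w*r - r) = 0" using eR1 eR2 c(1) by (elim conjE) Groebner_Basis.algebra
    have f1: "x + q*z - 1 = 0" using e1 c(2) by simp
    have f2: "y + q*w - q = 0" using e2 c(2) by simp
    have f3: "z + w*r - r = 0" using e3 c(2) by simp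
    have hz: "z = r*(1-w)" using f3 by Groebner_Basis.algebra
    have hy: "y = (1-p)/r*(1-w)" using f2 c(5) by Groebner_Basis.algebra
    have hx: "x = 1-(1-p)*(1-w)" using f1 hz qr by Groebner_Basis.algebra
    have "equiv_sm_rep n S T
              (\<lambda>i. blk n i (mat2 p ((1 - p) / r) r 0))
              (\<lambda>i. blk n i (mat2 (1 - (1 - p) * (1 - w)) ((1 - p) / r * (1 - w)) (r * (1 - w)) w))"
      by (rule equiv) (use Mq Nq c hx hy hz in simp_all)
    then show ?thesis using c part2 by blast
  next
    assume c: "p = 0" "s \<noteq> 0" "s \<noteq> 1" "r \<noteq> 0" "q = (1-s)/r"
    have qr: "q*r = 1-s" using c by simp
    have e1: "s*(q - x*q - y) = 0" using eR1 eR2 c(1) by (elim conjE) Groebner_Basis.algebra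
    have e2: "s*(r*x + z - r) = 0" using eR1 eR2 c(1) by (elim conjE) Groebner_Basis.algebra
    have e3: "s*(1 - z*q - w) = 0" using eR1 eR2 c(1) by (elim conjE) Groebner_Basis.algebra
    have f1: "q - x*q - y = 0" using e1 c(2) by simp
    have f2: "r*x + z - r = 0" using e2 c(2) by simp
    have f3: "1 - z*q - w = 0" using e3 c(2) by simp
    have hz: "z = r*(1-x)" using f2 by Groebner_Basis.algebra
    have hy: "y = (1-s)/r*(1-x)" using f1 c(5) by Groebner_Basis.algebra
    have hw: "w = 1-(1-s)*(1-x)" using f3 hz qr by Groebner_Basis.algebra
    have "equiv_sm_rep n S T
              (\<lambda>i. blk n i (mat2 0 ((1 - s) / r) r s))
              (\<lambda>i. blk n i (mat2 x ((1 - s) / r * (1 - x)) (r * (1 - x)) (1 - (1 - s) * (1 - x))))"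
      by (rule equiv) (use Mq Nq c hw hy hz in simp_all)
    then show ?thesis using c part2 by blast
  next
    assume c: "p = 0" "s = 0" "q \<noteq> 0" "r \<noteq> 0"
    have e1: "y*r = q*z" using eC c(1,2) by (elim conjE) Groebner_Basis.algebra
    have e2: "q*(x - w) = 0" using eC c(1,2) by (elim conjE) Groebner_Basis.algebra
    have hw: "w = x" using e2 c(3) by simp
    have hz: "z = r*y/q" using e1 c(3) by (simp add: field_simps)
    have "equiv_sm_rep n S T
              (\<lambda>i. blk n i (mat2 0 q r 0))
              (\<lambda>i. blk n i (mat2 x y (r * y / q) x))"
      by (rule equiv) (use Mq Nq c hw hz in simp_all)
    then show ?thesis using c part2 by blast
  qed
qed

end
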